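(* Let $G$ be a group with a symmetric, finitely supported generating probability measure $\mu$, and suppose that $(G,\mu)$ admits at least one non-constant positive harmonic function. Then the set of positive harmonic functions on $(G,\mu)$ spans an infinite-dimensional real vector space.
   Context: $\mu$ is generating if the semigroup generated by $\operatorname{supp}\mu$ is $G$, symmetric if $\mu(g)=\mu(g^{-1})$. $f:G\to\mathbb{R}$ is harmonic if $f(x)=\sum_{s\in\operatorname{supp}\mu}\mu(s)f(xs)$ for all $x$; it is positive if it takes only positive values. *)

theory Defs
  imports "HOL-Analysis.Analysis" "HOL-Library.Function_Algebras"
begin

(* Groups are written additively via the type class group_add
   (NOT assumed commutative): the group product x s is written x + s,
   the inverse g^-1 is -g. *)

definition supp_meas :: "('a \<Rightarrow> real) \<Rightarrow> 'a set" where
  "supp_meas \<mu> = {g. \<mu> g \<noteq> 0}"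

definition prob_measure_on_group :: "('a \<Rightarrow> real) \<Rightarrow> bool" where
  "prob_measure_on_group \<mu> \<longleftrightarrow> (\<forall>g. \<mu> g \<ge> 0) \<and> finite (supp_meas \<mu>)
     \<and> (\<Sum>g\<in>supp_meas \<mu>. \<mu> g) = 1"

inductive_set sgrp_gen :: "'a::group_add set \<Rightarrow> 'a set" for S where
  base: "s \<in> S \<Longrightarrow> s \<in> sgrp_gen S"
| step: "x \<in> sgrp_gen S \<Longrightarrow> s \<in> S \<Longrightarrow> x + s \<in> sgrp_gen S"

definition generating :: "('a::group_add \<Rightarrow> real) \<Rightarrow> bool" where
  "generating \<mu> \<longleftrightarrow> sgrp_gen (supp_meas \<mu>) = UNIV"

definition symmetric_meas :: "('a::group_add \<Rightarrow> real) \<Rightarrow> bool" where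
  "symmetric_meas \<mu> \<longleftrightarrow> (\<forall>g. \<mu> g = \<mu> (- g))"

definition harmonic :: "('a::group_add \<Rightarrow> real) \<Rightarrow> ('a \<Rightarrow> real) \<Rightarrow> bool" where
  "harmonic \<mu> f \<longleftrightarrow> (\<forall>x. f x = (\<Sum>s\<in>supp_meas \<mu>. \<mu> s * f (x + s)))"

definition positive_fun :: "('a \<Rightarrow> real) \<Rightarrow> bool" where
  "positive_fun f \<longleftrightarrow> (\<forall>x. f x > 0)"

definition fun_scale :: "real \<Rightarrow> ('a \<Rightarrow> real) \<Rightarrow> ('a \<Rightarrow> real)" where
  "fun_scale c f = (\<lambda>x. c * f x)"

abbreviation fun_span :: "('a \<Rightarrow> real) set \<Rightarrow> ('a \<Rightarrow> real) set" where
  "fun_span S \<equiv> module.span fun_scale S"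

definition infinite_dimensional_span :: "('a \<Rightarrow> real) set \<Rightarrow> bool" where
  "infinite_dimensional_span S \<longleftrightarrow> \<not> (\<exists>B. finite B \<and> fun_span S \<subseteq> fun_span B)"

lemma module_fun_scale: "module fun_scale"
  by unfold_locales (auto simp: fun_scale_def algebra_simps plus_fun_def)

end

theory Submission
  imports Defs
begin

lemma sum_fun_apply: "(sum f A) x = (\<Sum>a\<in>A. f a x)"
  by (induct A rule: infinite_finite_induct) auto

primrec Pn :: "('a::group_add \<Rightarrow> real) \<Rightarrow> nat \<Rightarrow> ('a \<Rightarrow> real) \<Rightarrow> 'a \<Rightarrow> real" where
  "Pn \<mu> 0 h x = h x"
| "Pn \<mu> (Suc k) h x = (\<Sum>s\<in>supp_meas \<mu>. \<mu> s * Pn \<mu> k h (x + s))"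

primrec Qn :: "('a::group_add \<Rightarrow> real) \<Rightarrow> nat \<Rightarrow> ('a \<Rightarrow> real) \<Rightarrow> 'a \<Rightarrow> real" where
  "Qn \<mu> 0 h x = h x"
| "Qn \<mu> (Suc k) h x = (\<Sum>s\<in>supp_meas \<mu>. \<mu> s * Qn \<mu> k h (s + x))"

lemma Pn_sum: "Pn \<mu> k (\<lambda>z. \<Sum>i\<in>I. f i z) x = (\<Sum>i\<in>I. Pn \<mu> k (f i) x)"
proof (induction k arbitrary: x)
  case 0 then show ?case by simp
next
  case (Suc k) then show ?case
    by (simp add: sum_distrib_left) (rule sum.swap)
qed

lemma Qn_sum: "Qn \<mu> k (\<lambda>z. \<Sum>i\<in>I. f i z) x = (\<Sum>i\<in>I. Qn \<mu> k (f i) x)"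
proof (induction k arbitrary: x)
  case 0 then show ?case by simp
next
  case (Suc k) then show ?case
    by (simp add: sum_distrib_left) (rule sum.swap)
qed

lemma Pn_add: "Pn \<mu> k (\<lambda>z. f z + g z) x = Pn \<mu> k f x + Pn \<mu> k g x"
  by (induction k arbitrary: x) (simp_all add: sum.distrib distrib_left)

lemma Pn_scale: "Pn \<mu> k (\<lambda>z. c * f z) x = c * Pn \<mu> k f x"
  by (induction k arbitrary: x) (simp_all add: sum_distrib_left algebra_simps)

lemma Pn_diff: "Pn \<mu> k (\<lambda>z. f z - g z) x = Pn \<mu> k f x - Pn \<mu> k g x"
  by (induction k arbitrary: x) (simp_all add: sum_subtractf right_diff_distrib)

lemma Pn_Suc': "Pn \<mu> (Suc k) h x = Pn \<mu> k (\<lambda>z. \<Sum>s\<in>supp_meas \<mu>. \<mu> s * h (z + s)) x"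
proof (induction k arbitrary: x)
  case 0 then show ?case by simp
next
  case (Suc k)
  have "Pn \<mu> (Suc (Suc k)) h x = (\<Sum>s\<in>supp_meas \<mu>. \<mu> s * Pn \<mu> (Suc k) h (x + s))" by simp
  also have "\<dots> = (\<Sum>s\<in>supp_meas \<mu>. \<mu> s * Pn \<mu> k (\<lambda>z. \<Sum>s\<in>supp_meas \<mu>. \<mu> s * h (z + s)) (x + s))"
    using Suc by simp
  finally show ?case by simp
qed

lemma Qn_Suc': "Qn \<mu> (Suc k) h x = Qn \<mu> k (\<lambda>z. \<Sum>s\<in>supp_meas \<mu>. \<mu> s * h (s + z)) x"
proof (induction k arbitrary: x)
  case 0 then show ?case by simp
next
  case (Suc k)
  have "Qn \<mu> (Suc (Suc k)) h x = (\<Sum>s\<in>supp_meas \<mu>. \<mu> s * Qn \<mu> (Suc k) h (s + x))" by simp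
  also have "\<dots> = (\<Sum>s\<in>supp_meas \<mu>. \<mu> s * Qn \<mu> k (\<lambda>z. \<Sum>s\<in>supp_meas \<mu>. \<mu> s * h (s + z)) (s + x))"
    using Suc by simp
  finally show ?case by simp
qed

lemma Pn_Qn: "Pn \<mu> k (\<lambda>z. h (z + b)) a = Qn \<mu> k (\<lambda>z. h (a + z)) b"
proof (induction k arbitrary: h a b)
  case 0 then show ?case by simp
next
  case (Suc k)
  have "Pn \<mu> (Suc k) (\<lambda>z. h (z + b)) a = (\<Sum>s\<in>supp_meas \<mu>. \<mu> s * Qn \<mu> k (\<lambda>z. h (a + s + z)) b)"
    using Suc by simp
  also have "\<dots> = Qn \<mu> k (\<lambda>z. \<Sum>s\<in>supp_meas \<mu>. \<mu> s * h (a + (s + z))) b"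
  proof -
    have "Qn \<mu> k (\<lambda>z. \<Sum>s\<in>supp_meas \<mu>. \<mu> s * h (a + (s + z))) b
        = (\<Sum>s\<in>supp_meas \<mu>. Qn \<mu> k (\<lambda>z. \<mu> s * h (a + (s + z))) b)"
      by (rule Qn_sum)
    moreover have "Qn \<mu> k (\<lambda>z. c * f z) x = c * Qn \<mu> k f x" for c f x
      by (induction k arbitrary: x) (simp_all add: sum_distrib_left algebra_simps)
    ultimately show ?thesis by (simp add: add.assoc)
  qed
  also have "\<dots> = Qn \<mu> (Suc k) (\<lambda>z. h (a + z)) b" by (simp only: Qn_Suc')
  finally show ?case .
qed

lemma Pn_Pn: "Pn \<mu> n (Pn \<mu> k g) x = Pn \<mu> (n + k) g x"
  by (induction n arbitrary: x) simp_all

locale rw =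
  fixes \<mu> :: "'a::group_add \<Rightarrow> real"
  assumes pm: "prob_measure_on_group \<mu>" and sy: "symmetric_meas \<mu>"
begin

abbreviation "S \<equiv> supp_meas \<mu>"

lemma finS: "finite S" using pm by (simp add: prob_measure_on_group_def)
lemma nonneg: "\<mu> s \<ge> 0" using pm by (simp add: prob_measure_on_group_def)
lemma pos: "s \<in> S \<Longrightarrow> \<mu> s > 0" using nonneg[of s] by (simp add: supp_meas_def)
lemma sum1: "(\<Sum>s\<in>S. \<mu> s) = 1" using pm by (simp add: prob_measure_on_group_def)
lemma le1: "\<mu> s \<le> 1"
proof (cases "s \<in> S")
  case True
  have "\<mu> s \<le> (\<Sum>s\<in>S. \<mu> s)" by (rule member_le_sum[OF True]) (auto simp: nonneg finS)
  then show ?thesis using sum1 by simp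
next
  case False then show ?thesis by (simp add: supp_meas_def)
qed
lemma muneg: "\<mu> (- s) = \<mu> s"
  using sy unfolding symmetric_meas_def by metis
lemma Sneg: "s \<in> S \<Longrightarrow> - s \<in> S"
  by (simp add: supp_meas_def muneg)

lemma sum_neg: "(\<Sum>s\<in>S. f (- s)) = (\<Sum>s\<in>S. f s)"
  by (rule sum.reindex_bij_witness[of _ uminus uminus]) (auto simp: Sneg)

lemma Pn_const: "Pn \<mu> k (\<lambda>z. c) x = c"
  by (induction k arbitrary: x) (simp_all add: sum_distrib_right[symmetric] sum1)

lemma Pn_mono: "(\<And>z. f z \<le> g z) \<Longrightarrow> Pn \<mu> k f x \<le> Pn \<mu> k g x"
proof (induction k arbitrary: x)
  case 0 then show ?case by simp
next
  case (Suc k) then show ?case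
    by (simp, intro sum_mono mult_left_mono, auto simp: nonneg)
qed

lemma Pn_nonneg: "(\<And>z. 0 \<le> f z) \<Longrightarrow> 0 \<le> Pn \<mu> k f x"
  using Pn_mono[of "\<lambda>_. 0" f k x] by (simp add: Pn_const)

lemma Pn_harm: "harmonic \<mu> h \<Longrightarrow> Pn \<mu> k h x = h x"
proof (induction k arbitrary: x)
  case 0 then show ?case by simp
next
  case (Suc k)
  have "h x = (\<Sum>s\<in>S. \<mu> s * h (x + s))" using Suc.prems unfolding harmonic_def by blast
  then show ?case using Suc.IH[OF Suc.prems] by simp
qed

lemma Pn_neg_Qn: "Pn \<mu> k (\<lambda>z. h (- z)) x = Qn \<mu> k h (- x)"
proof (induction k arbitrary: x)
  case 0 then show ?case by simp
next
  case (Suc k)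
  have "Pn \<mu> (Suc k) (\<lambda>z. h (- z)) x = (\<Sum>s\<in>S. \<mu> s * Qn \<mu> k h (- s + - x))"
    using Suc by (simp add: minus_add)
  also have "\<dots> = (\<Sum>s\<in>S. \<mu> (- s) * Qn \<mu> k h (- s + - x))"
    by (simp add: muneg)
  also have "\<dots> = (\<Sum>s\<in>S. \<mu> s * Qn \<mu> k h (s + - x))"
    by (rule sum_neg[where f = "\<lambda>s. \<mu> s * Qn \<mu> k h (s + - x)"])
  finally show ?case by simp
qed

lemma Pn_neg: "Pn \<mu> k (\<lambda>z. h (- z)) 0 = Pn \<mu> k h 0"
  using Pn_neg_Qn[of k h 0] Pn_Qn[of \<mu> k h 0 0] by simp

end

lemma frac_id: fixes A B :: real assumes "A > 0" "B > 0"
  shows "1/B - 1/A = (B-A)^2/(A^2*B) - (B-A)/A^2"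
proof -
  have "(B-A)^2/(A^2*B) - (B-A)/A^2 = ((B-A)^2 - (B-A)*B)/(A^2*B)"
    using assms by (simp add: diff_divide_distrib power2_eq_square)
  also have "(B-A)^2 - (B-A)*B = A*(A - B)" by (simp add: power2_eq_square algebra_simps)
  also have "A*(A-B)/(A^2*B) = (A - B)/(A*B)" using assms by (simp add: power2_eq_square)
  also have "\<dots> = 1/B - 1/A" using assms by (simp add: field_simps)
  finally show ?thesis ..
qed

lemma aux_eq: fixes m X D B :: real assumes "m > 0"
  shows "m^2 * X / (D * (m * B)) = m * (X / (D * B))"
proof -
  have "m^2 * X / (D * (m * B)) = (m * m) * X / (m * (D * B))" by (simp add: power2_eq_square algebra_simps)
  also have "\<dots> = m * X / (D * B)" using assms by (simp only: mult.assoc mult_divide_mult_cancel_left_if) simp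
  finally show ?thesis by simp
qed

context rw begin

lemma harn1:
  assumes h: "harmonic \<mu> t" and p: "positive_fun t" and s: "s \<in> S"
  shows "\<mu> s * t (x + s) \<le> t x"
proof -
  have "t x = (\<Sum>s\<in>S. \<mu> s * t (x + s))" using h unfolding harmonic_def by blast
  moreover have "\<mu> s * t (x + s) \<le> (\<Sum>s\<in>S. \<mu> s * t (x + s))"
    by (rule member_le_sum[OF s]) (use p nonneg finS in \<open>auto simp: positive_fun_def less_imp_le\<close>)
  ultimately show ?thesis by simp
qed

lemma deficit:
  assumes h: "harmonic \<mu> t" and p: "positive_fun t" and s0: "s0 \<in> S"
  shows "\<mu> s0 ^ 2 * (t (x + s0) - t x)^2 / (1 + t x)^3
     \<le> (\<Sum>s\<in>S. \<mu> s * (1 / (1 + t (x + s)))) - 1 / (1 + t x)"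
proof -
  define a where "a = t x"
  define b where "b s = t (x + s)" for s
  have a0: "a > 0" using p by (simp add: positive_fun_def a_def)
  have b0: "b s > 0" for s using p by (simp add: positive_fun_def b_def)
  have ha: "a = (\<Sum>s\<in>S. \<mu> s * b s)" using h unfolding harmonic_def a_def b_def by blast
  have tm: "1 / (1 + b s) - 1 / (1 + a) = (b s - a)^2 / ((1 + a)^2 * (1 + b s)) - (b s - a) / (1 + a)^2" for s
    using frac_id[of "1 + a" "1 + b s"] a0 b0[of s] by simp
  have "(\<Sum>s\<in>S. \<mu> s * (1 / (1 + b s))) - 1 / (1 + a)
      = (\<Sum>s\<in>S. \<mu> s * (1 / (1 + b s) - 1 / (1 + a)))"
    by (simp add: right_diff_distrib sum_subtractf sum_divide_distrib[symmetric] sum1)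
  also have "\<dots> = (\<Sum>s\<in>S. \<mu> s * ((b s - a)^2 / ((1 + a)^2 * (1 + b s)))) - (\<Sum>s\<in>S. \<mu> s * (b s - a) / (1 + a)^2)"
    by (simp only: tm right_diff_distrib sum_subtractf times_divide_eq_right)
  also have "(\<Sum>s\<in>S. \<mu> s * (b s - a) / (1 + a)^2) = (\<Sum>s\<in>S. \<mu> s * (b s - a)) / (1 + a)^2"
    by (rule sum_divide_distrib[symmetric])
  also have "(\<Sum>s\<in>S. \<mu> s * (b s - a)) = 0"
    by (simp add: right_diff_distrib sum_subtractf sum_distrib_right[symmetric] sum1 ha[symmetric])
  finally have eq: "(\<Sum>s\<in>S. \<mu> s * (1 / (1 + b s))) - 1 / (1 + a)
       = (\<Sum>s\<in>S. \<mu> s * ((b s - a)^2 / ((1 + a)^2 * (1 + b s))))" by simp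
  have ge: "\<mu> s0 * ((b s0 - a)^2 / ((1 + a)^2 * (1 + b s0))) \<le> (\<Sum>s\<in>S. \<mu> s * ((b s - a)^2 / ((1 + a)^2 * (1 + b s))))"
    by (rule member_le_sum[OF s0]) (use nonneg finS a0 b0 in \<open>auto intro!: mult_nonneg_nonneg divide_nonneg_pos add_pos_pos mult_pos_pos\<close>)
  have m0: "\<mu> s0 > 0" using pos[OF s0] .
  have mb: "\<mu> s0 * (1 + b s0) \<le> 1 + a"
    using harn1[OF h p s0, of x] le1[of s0] by (simp add: a_def b_def distrib_left)
  have "\<mu> s0 ^ 2 * (b s0 - a)^2 / (1 + a)^3 \<le> \<mu> s0 ^ 2 * (b s0 - a)^2 / ((1 + a)^2 * (\<mu> s0 * (1 + b s0)))"
    apply (rule divide_left_mono)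
    using mb a0 b0[of s0] m0 by (auto simp: power3_eq_cube power2_eq_square intro!: mult_left_mono mult_pos_pos)
  also have "\<dots> = \<mu> s0 * ((b s0 - a)^2 / ((1 + a)^2 * (1 + b s0)))"
    using m0 by (rule aux_eq)
  finally show ?thesis using ge eq by (simp add: a_def b_def)
qed

end

lemma sq_sum_le: fixes a b :: real shows "(a + b)^2 \<le> 2 * a^2 + 2 * b^2"
proof -
  have "0 \<le> (a - b)^2" by simp
  then show ?thesis by (simp add: power2_eq_square algebra_simps)
qed

context rw begin

definition gt :: "('a \<Rightarrow> real) \<Rightarrow> 'a \<Rightarrow> real" where
  "gt t = (\<lambda>z. 1 / (1 + t z))"

definition Dt :: "('a \<Rightarrow> real) \<Rightarrow> 'a \<Rightarrow> real" where
  "Dt t = (\<lambda>z. (\<Sum>s\<in>S. \<mu> s * gt t (z + s)) - gt t z)"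

lemma S_ne: "S \<noteq> {}" using sum1 by auto

lemma onestep:
  assumes h: "harmonic \<mu> t" and p: "positive_fun t" and s: "s \<in> S"
  shows "(t (z + s) - t z)^2 \<le> (1 / \<mu> s ^ 2) * (1 + t z)^3 * Dt t z"
proof -
  have m: "\<mu> s > 0" using pos[OF s] .
  have T: "(1 + t z)^3 > 0" using p by (simp add: positive_fun_def add_pos_pos)
  have "\<mu> s ^ 2 * (t (z + s) - t z)^2 / (1 + t z)^3 \<le> Dt t z"
    using deficit[OF h p s, of z] by (simp add: Dt_def gt_def)
  then have "\<mu> s ^ 2 * (t (z + s) - t z)^2 \<le> Dt t z * (1 + t z)^3"
    using T by (simp add: pos_divide_le_eq)
  then have "(t (z + s) - t z)^2 \<le> Dt t z * (1 + t z)^3 / \<mu> s ^ 2"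
    using m by (simp add: pos_le_divide_eq mult.commute)
  then show ?thesis by (simp add: field_simps)
qed

lemma Dt_nonneg:
  assumes h: "harmonic \<mu> t" and p: "positive_fun t"
  shows "0 \<le> Dt t z"
proof -
  obtain s where s: "s \<in> S" using S_ne by auto
  have "\<mu> s ^ 2 * (t (z + s) - t z)^2 / (1 + t z)^3 \<le> Dt t z"
    using deficit[OF h p s, of z] by (simp add: Dt_def gt_def)
  moreover have "0 \<le> \<mu> s ^ 2 * (t (z + s) - t z)^2 / (1 + t z)^3"
    using p by (simp add: positive_fun_def add_pos_pos less_imp_le)
  ultimately show ?thesis by linarith
qed

lemma Pn_Suc_D: "Pn \<mu> (Suc k) (gt t) x = Pn \<mu> k (gt t) x + Pn \<mu> k (Dt t) x"
proof -
  have "Pn \<mu> (Suc k) (gt t) x = Pn \<mu> k (\<lambda>z. gt t z + Dt t z) x"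
    unfolding Pn_Suc' by (simp add: Dt_def)
  then show ?thesis by (simp add: Pn_add)
qed

lemma Pn_gt_ge:
  assumes h: "harmonic \<mu> t" and p: "positive_fun t"
  shows "gt t x \<le> Pn \<mu> k (gt t) x"
proof (induction k)
  case 0 then show ?case by simp
next
  case (Suc k)
  have "0 \<le> Pn \<mu> k (Dt t) x" by (rule Pn_nonneg) (rule Dt_nonneg[OF h p])
  then show ?case using Suc Pn_Suc_D[of k t x] by linarith
qed

lemma walk_lemma:
  assumes h: "harmonic \<mu> t" and p: "positive_fun t" and y: "y \<in> sgrp_gen S"
  shows "\<exists>k c C. 0 < c \<and> 0 \<le> C \<and> (\<forall>f x. (\<forall>z. 0 \<le> f z) \<longrightarrow> c * f (x + y) \<le> Pn \<mu> k f x)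
     \<and> (\<forall>x. (t (x + y) - t x)^2 \<le> C * (1 + t x)^3 * (Pn \<mu> k (gt t) x - gt t x))"
  using y
proof induction
  case (base s)
  have m: "\<mu> s > 0" using pos[OF base] .
  have r: "\<mu> s * f (x + s) \<le> Pn \<mu> 1 f x" if "\<forall>z. 0 \<le> f z" for f x
    using that by (simp, intro member_le_sum[OF base]) (auto simp: nonneg finS)
  have q: "(t (x + s) - t x)^2 \<le> (1 / \<mu> s ^ 2) * (1 + t x)^3 * (Pn \<mu> 1 (gt t) x - gt t x)" for x
    using onestep[OF h p base, of x] by (simp add: Dt_def)
  show ?case
    by (rule exI[of _ 1], rule exI[of _ "\<mu> s"], rule exI[of _ "1 / \<mu> s ^ 2"]) (use m r q in auto)
next
  case (step y s)
  obtain k c C where c0: "0 < c" and C0: "0 \<le> C"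
    and R: "\<And>f x. (\<forall>z. 0 \<le> f z) \<Longrightarrow> c * f (x + y) \<le> Pn \<mu> k f x"
    and Q: "\<And>x. (t (x + y) - t x)^2 \<le> C * (1 + t x)^3 * (Pn \<mu> k (gt t) x - gt t x)"
    using step.IH by blast
  have m: "\<mu> s > 0" using pos[OF step.hyps(2)] .
  have c1: "c \<le> 1" using R[of "\<lambda>_. 1" 0] by (simp add: Pn_const)
  have R': "c * \<mu> s * f (x + (y + s)) \<le> Pn \<mu> (Suc k) f x" if f0: "\<forall>z. 0 \<le> f z" for f x
  proof -
    have nn: "\<forall>z. 0 \<le> (\<Sum>s\<in>S. \<mu> s * f (z + s))" using f0 by (auto intro!: sum_nonneg simp: nonneg)
    have "\<mu> s * f (x + y + s) \<le> (\<Sum>s\<in>S. \<mu> s * f (x + y + s))"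
      by (rule member_le_sum[OF step.hyps(2)]) (use f0 in \<open>auto simp: nonneg finS\<close>)
    then have "c * (\<mu> s * f (x + y + s)) \<le> c * (\<Sum>s\<in>S. \<mu> s * f (x + y + s))"
      using c0 by simp
    also have "\<dots> \<le> Pn \<mu> (Suc k) f x"
      using R[OF nn, of x] by (simp only: Pn_Suc')
    finally show ?thesis by (simp add: add.assoc mult.assoc)
  qed
  define C' where "C' = 2 * C + 2 / (\<mu> s ^ 2 * c ^ 4)"
  have C'0: "0 \<le> C'" using C0 m c0 by (simp add: C'_def)
  have Q': "(t (x + (y + s)) - t x)^2 \<le> C' * (1 + t x)^3 * (Pn \<mu> (Suc k) (gt t) x - gt t x)" for x
  proof -
    define T where "T = 1 + t x"
    define E where "E = Pn \<mu> k (gt t) x - gt t x"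
    define q where "q = Pn \<mu> k (Dt t) x"
    have T0: "T > 0" using p by (simp add: T_def positive_fun_def add_pos_pos)
    have E0: "E \<ge> 0" using Pn_gt_ge[OF h p] by (simp add: E_def)
    have q0: "q \<ge> 0" unfolding q_def by (rule Pn_nonneg) (rule Dt_nonneg[OF h p])
    have tot: "Pn \<mu> (Suc k) (gt t) x - gt t x = E + q" unfolding Pn_Suc_D E_def q_def by simp
    have harn: "c * t (x + y) \<le> t x"
      using R[of t x] p Pn_harm[OF h] by (auto simp: positive_fun_def less_imp_le)
    have h1: "1 + t (x + y) \<le> T / c" using harn c0 c1 by (simp add: T_def pos_le_divide_eq algebra_simps)
    have h2: "Dt t (x + y) \<le> q / c"
      using R[of "Dt t" x] Dt_nonneg[OF h p] c0 by (simp add: q_def pos_le_divide_eq mult.commute)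
    have ty0: "0 < 1 + t (x + y)" using p by (simp add: positive_fun_def add_pos_pos)
    have a2: "(t (x + y + s) - t (x + y))^2 \<le> (1 / \<mu> s ^ 2) * (1 + t (x + y))^3 * Dt t (x + y)"
      by (rule onestep[OF h p step.hyps(2)])
    also have "\<dots> \<le> (1 / \<mu> s ^ 2) * (T / c)^3 * (q / c)"
      apply (intro mult_mono power_mono h1 h2)
      using ty0 m Dt_nonneg[OF h p] T0 c0 by (auto intro!: mult_nonneg_nonneg)
    also have "\<dots> = T^3 * q / (\<mu> s ^ 2 * c ^ 4)"
      using c0 m by (simp add: field_simps power3_eq_cube power4_eq_xxxx)
    finally have a2': "(t (x + y + s) - t (x + y))^2 \<le> T^3 * q / (\<mu> s ^ 2 * c ^ 4)" .
    have b2: "(t (x + y) - t x)^2 \<le> C * T^3 * E" using Q[of x] by (simp add: T_def E_def)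
    have "(t (x + (y + s)) - t x)^2 = ((t (x + y + s) - t (x + y)) + (t (x + y) - t x))^2"
      by (simp add: add.assoc)
    also have "\<dots> \<le> 2 * (t (x + y + s) - t (x + y))^2 + 2 * (t (x + y) - t x)^2" by (rule sq_sum_le)
    also have "\<dots> \<le> 2 * (T^3 * q / (\<mu> s ^ 2 * c ^ 4)) + 2 * (C * T^3 * E)" using a2' b2 by linarith
    also have "\<dots> \<le> C' * T^3 * (E + q)"
    proof -
      define K where "K = 2 / (\<mu> s ^ 2 * c ^ 4)"
      have K0: "0 \<le> K" using m c0 by (simp add: K_def)
      have e1: "2 * (T^3 * q / (\<mu> s ^ 2 * c ^ 4)) = K * T^3 * q" by (simp add: K_def)
      have e2: "C' = 2 * C + K" by (simp add: C'_def K_def)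
      have "0 \<le> 2 * C * T^3 * q" using C0 T0 q0 by simp
      moreover have "0 \<le> K * T^3 * E" using K0 T0 E0 by simp
      ultimately show ?thesis unfolding e1 e2 by (simp add: algebra_simps)
    qed
    finally show ?thesis by (simp only: tot T_def)
  qed
  show ?case
    by (rule exI[of _ "Suc k"], rule exI[of _ "c * \<mu> s"], rule exI[of _ C']) (use c0 m C'0 R' Q' in auto)
qed

end

lemma vs_fun_scale: "vector_space fun_scale"
  using module_fun_scale by (simp add: module_iff_vector_space)

interpretation fs: vector_space fun_scale by (rule vs_fun_scale)

lemma fun_scale_apply: "fun_scale c f x = c * f x" by (simp add: fun_scale_def)

lemma span_fin_repr:
  assumes "finite T" "h \<in> fun_span T"
  shows "\<exists>c. \<forall>z. h z = (\<Sum>t\<in>T. c t * t z)"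
proof -
  obtain u where "h = (\<Sum>v\<in>T. fun_scale (u v) v)"
    using assms fs.span_finite by blast
  then show ?thesis by (auto simp: sum_fun_apply fun_scale_apply)
qed

lemma span_fin_mem:
  assumes "finite T"
  shows "(\<lambda>z. \<Sum>t\<in>T. c t * t z) \<in> fun_span T"
proof -
  have "(\<lambda>z. \<Sum>t\<in>T. c t * t z) = (\<Sum>t\<in>T. fun_scale (c t) t)"
    by (auto simp: sum_fun_apply fun_scale_apply)
  also have "\<dots> \<in> fun_span T"
    by (intro fs.span_sum fs.span_scale fs.span_base)
  finally show ?thesis .
qed

lemma lagrange:
  fixes T :: "('a \<Rightarrow> real) set"
  assumes "finite T"
  shows "\<exists>Y L. finite Y \<and> (\<forall>y\<in>Y. L y \<in> fun_span T) \<and> (\<forall>y\<in>Y. \<forall>y'\<in>Y. L y y' = (if y = y' then 1 else 0))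
     \<and> (\<forall>h\<in>fun_span T. (\<forall>y\<in>Y. h y = 0) \<longrightarrow> h = 0)"
  using assms
proof (induction T rule: finite_induct)
  case empty
  show ?case by (rule exI[of _ "{}"]) auto
next
  case (insert f T)
  then obtain Y L where Y: "finite Y" and LT: "\<forall>y\<in>Y. L y \<in> fun_span T"
    and Ld: "\<forall>y\<in>Y. \<forall>y'\<in>Y. L y y' = (if y = y' then 1 else 0)"
    and U: "\<forall>h\<in>fun_span T. (\<forall>y\<in>Y. h y = 0) \<longrightarrow> h = 0" by blast
  have sub: "fun_span T \<subseteq> fun_span (insert f T)" by (rule fs.span_mono) auto
  define p where "p = (\<Sum>y\<in>Y. fun_scale (f y) (L y))"
  have pT: "p \<in> fun_span T" unfolding p_def using LT by (intro fs.span_sum fs.span_scale) auto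
  define g where "g = f - p"
  have gI: "g \<in> fun_span (insert f T)"
    unfolding g_def using pT sub fs.span_base[of f "insert f T"] by (intro fs.span_diff) auto
  have pY: "p y' = f y'" if "y' \<in> Y" for y'
  proof -
    have "p y' = (\<Sum>y\<in>Y. f y * L y y')" by (simp add: p_def sum_fun_apply fun_scale_apply)
    also have "\<dots> = (\<Sum>y\<in>Y. if y = y' then f y else 0)"
      by (rule sum.cong) (use Ld that in auto)
    also have "\<dots> = f y'" using that Y by simp
    finally show ?thesis .
  qed
  have gY: "g y' = 0" if "y' \<in> Y" for y' using pY[OF that] by (simp add: g_def)
  show ?case
  proof (cases "g = 0")
    case True
    then have "f = p" by (simp add: g_def)
    then have "f \<in> fun_span T" using pT by simp
    then have eq: "fun_span (insert f T) = fun_span T" by (rule fs.span_redundant)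
    show ?thesis unfolding eq by (rule exI[of _ Y], rule exI[of _ L]) (use Y LT Ld U in blast)
  next
    case False
    then obtain y0 where gy0: "g y0 \<noteq> 0" by (auto simp: fun_eq_iff)
    have y0Y: "y0 \<notin> Y" using gY gy0 by auto
    define L0 where "L0 = fun_scale (1 / g y0) g"
    define L' where "L' y = (if y = y0 then L0 else L y - fun_scale (L y y0) L0)" for y
    have L0I: "L0 \<in> fun_span (insert f T)" unfolding L0_def by (intro fs.span_scale gI)
    have L0y0: "L0 y0 = 1" using gy0 by (simp add: L0_def fun_scale_apply)
    have L0Y: "L0 y' = 0" if "y' \<in> Y" for y' using gY[OF that] by (simp add: L0_def fun_scale_apply)
    have A: "finite (insert y0 Y)" using Y by simp
    have B: "\<forall>y\<in>insert y0 Y. L' y \<in> fun_span (insert f T)"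
      using L0I LT sub by (auto simp: L'_def intro!: fs.span_diff fs.span_scale)
    have C: "\<forall>y\<in>insert y0 Y. \<forall>y'\<in>insert y0 Y. L' y y' = (if y = y' then 1 else 0)"
      using L0y0 L0Y Ld y0Y by (auto simp: L'_def fun_scale_apply)
    have D: "\<forall>h\<in>fun_span (insert f T). (\<forall>y\<in>insert y0 Y. h y = 0) \<longrightarrow> h = 0"
    proof (intro ballI impI)
      fix h assume hI: "h \<in> fun_span (insert f T)" and h0: "\<forall>y\<in>insert y0 Y. h y = 0"
      obtain k where hk: "h - fun_scale k f \<in> fun_span T"
        using hI fs.span_insert by blast
      have "h - fun_scale k g = (h - fun_scale k f) + fun_scale k p"
        by (simp add: g_def fun_eq_iff fun_scale_apply algebra_simps)
      also have "\<dots> \<in> fun_span T" using hk pT by (intro fs.span_add fs.span_scale)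
      finally have in1: "h - fun_scale k g \<in> fun_span T" .
      have "\<forall>y\<in>Y. (h - fun_scale k g) y = 0" using h0 gY by (simp add: fun_scale_apply)
      then have "h - fun_scale k g = 0" using U in1 by blast
      then have hg: "h = fun_scale k g" by simp
      have "h y0 = 0" using h0 by simp
      then have "k * g y0 = 0" using hg by (simp add: fun_scale_apply)
      then have "k = 0" using gy0 by simp
      then show "h = 0" using hg by (simp add: fun_eq_iff fun_scale_apply)
    qed
    show ?thesis by (rule exI[of _ "insert y0 Y"], rule exI[of _ L']) (use A B C D in blast)
  qed
qed

lemma telescope_bound:
  fixes a :: "nat \<Rightarrow> real"
  assumes "\<And>n. 0 \<le> a n" "\<And>n. a n \<le> 1"
  shows "(\<Sum>n<N. a (n + k) - a n) \<le> real k"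
proof (induction k)
  case 0 then show ?case by simp
next
  case (Suc k)
  have "(\<Sum>n<N. a (n + Suc k) - a n) = (\<Sum>n<N. a (Suc n + k) - a (n + k)) + (\<Sum>n<N. a (n + k) - a n)"
    by (simp add: sum.distrib[symmetric])
  also have "(\<Sum>n<N. a (Suc n + k) - a (n + k)) = a (N + k) - a (0 + k)"
    by (rule sum_lessThan_telescope[where f = "\<lambda>n. a (n + k)"])
  also have "\<dots> \<le> 1" using assms[of "N + k"] assms[of k] by simp
  finally show ?case using Suc by simp
qed

lemma pigeon:
  fixes a :: "'b \<Rightarrow> real"
  assumes fin: "finite I" and ge: "\<eta> \<le> (\<Sum>i\<in>I. a i)" and eta: "0 < \<eta>"
  shows "\<exists>i\<in>I. \<eta> / real (card I) \<le> a i"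
proof (rule ccontr)
  assume "\<not> ?thesis"
  then have lt: "\<And>i. i \<in> I \<Longrightarrow> a i < \<eta> / real (card I)" by force
  have ne: "I \<noteq> {}" using ge eta by auto
  have "(\<Sum>i\<in>I. a i) < (\<Sum>i\<in>I. \<eta> / real (card I))"
    by (rule sum_strict_mono[OF fin ne lt])
  also have "\<dots> = \<eta>" using ne fin by simp
  finally show False using ge by simp
qed

theorem proposition8p3:
  fixes \<mu> :: "'a::group_add \<Rightarrow> real"
  assumes "prob_measure_on_group \<mu>"
    and "symmetric_meas \<mu>"
    and "generating \<mu>"
    and "\<exists>f. harmonic \<mu> f \<and> positive_fun f \<and> (\<exists>x y. f x \<noteq> f y)"
  shows "infinite_dimensional_span {f. harmonic \<mu> f \<and> positive_fun f}"
proof (rule ccontr)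
  define Sp where "Sp = {f. harmonic \<mu> f \<and> positive_fun f}"
  assume "\<not> infinite_dimensional_span {f. harmonic \<mu> f \<and> positive_fun f}"
  then obtain B where finB: "finite B" and spB: "fun_span Sp \<subseteq> fun_span B"
    unfolding infinite_dimensional_span_def Sp_def by blast
  interpret rw \<mu> using assms(1,2) by (rule rw.intro)
  have gen: "y \<in> sgrp_gen S" for y using assms(3) by (simp add: generating_def)
  obtain T where TS: "T \<subseteq> Sp" and indT: "fs.independent T" and SpT: "Sp \<subseteq> fun_span T"
    using fs.maximal_independent_subset[of Sp] by blast
  have "T \<subseteq> fun_span B" using TS spB fs.span_superset by blast
  then have finT: "finite T" using fs.independent_span_bound[OF finB indT] by blast
  have Th: "harmonic \<mu> t" "positive_fun t" if "t \<in> T" for t using TS that by (auto simp: Sp_def)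
  have tpos: "0 < t z" if "t \<in> T" for t z using Th(2)[OF that] by (simp add: positive_fun_def)
  have one: "(\<lambda>_. 1) \<in> Sp" by (simp add: Sp_def harmonic_def positive_fun_def sum1)
  have transl: "(\<lambda>z. f (x + z)) \<in> Sp" if "f \<in> Sp" for f x
  proof -
    have hf: "\<And>w. f w = (\<Sum>s\<in>S. \<mu> s * f (w + s))" using that unfolding Sp_def harmonic_def by blast
    have "harmonic \<mu> (\<lambda>z. f (x + z))" unfolding harmonic_def
    proof
      fix z
      have e: "f (x + z) = (\<Sum>s\<in>S. \<mu> s * f (x + z + s))" by (rule hf)
      show "f (x + z) = (\<Sum>s\<in>S. \<mu> s * f (x + (z + s)))" unfolding add.assoc[symmetric] by (rule e)
    qed
    then show ?thesis using that by (simp add: Sp_def positive_fun_def)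
  qed
  have Tne: "T \<noteq> {}"
  proof
    assume "T = {}"
    have "(\<lambda>_::'a. 1::real) \<in> fun_span T" using one SpT by blast
    then have "(\<lambda>_::'a. 1::real) = 0" using \<open>T = {}\<close> by simp
    then show False by (simp add: fun_eq_iff)
  qed
  define F where "F = (\<lambda>z. \<Sum>t\<in>T. t z)"
  have Fpos: "0 < F z" for z unfolding F_def using finT Tne tpos by (intro sum_pos) auto
  have tF: "t z \<le> F z" if "t \<in> T" for t z unfolding F_def
    by (rule member_le_sum[OF that]) (use tpos finT in \<open>auto intro: less_imp_le\<close>)
  have Fh: "harmonic \<mu> F"
    unfolding harmonic_def
  proof
    fix x
    have "F x = (\<Sum>t\<in>T. \<Sum>s\<in>S. \<mu> s * t (x + s))"
    proof (unfold F_def, rule sum.cong[OF refl])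
      fix t assume "t \<in> T"
      then show "t x = (\<Sum>s\<in>S. \<mu> s * t (x + s))" using Th(1) unfolding harmonic_def by blast
    qed
    also have "\<dots> = (\<Sum>s\<in>S. \<mu> s * F (x + s))"
      unfolding F_def by (simp add: sum_distrib_left) (rule sum.swap)
    finally show "F x = (\<Sum>s\<in>S. \<mu> s * F (x + s))" .
  qed
  have Fp: "positive_fun F" using Fpos by (simp add: positive_fun_def)

  obtain Y L where finY: "finite Y" and LT: "\<forall>y\<in>Y. L y \<in> fun_span T"
    and Ld: "\<forall>y\<in>Y. \<forall>y'\<in>Y. L y y' = (if y = y' then 1 else 0)"
    and U: "\<forall>h\<in>fun_span T. (\<forall>y\<in>Y. h y = 0) \<longrightarrow> h = 0"
    using lagrange[OF finT] by blast
  have "\<forall>y\<in>Y. \<exists>c. \<forall>z. L y z = (\<Sum>t\<in>T. c t * t z)"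
    using LT span_fin_repr[OF finT] by blast
  then obtain cy where cy: "\<And>y z. y \<in> Y \<Longrightarrow> L y z = (\<Sum>t\<in>T. cy y t * t z)"
    by metis
  define A where "A = (\<Sum>y\<in>Y. \<Sum>t\<in>T. \<bar>cy y t\<bar>)"
  have A0: "0 \<le> A" by (simp add: A_def sum_nonneg)
  have Lb: "\<bar>L y z\<bar> \<le> A * F z" if y: "y \<in> Y" for y z
  proof -
    have "\<bar>L y z\<bar> \<le> (\<Sum>t\<in>T. \<bar>cy y t * t z\<bar>)"
      unfolding cy[OF y] by (rule sum_abs)
    also have "\<dots> = (\<Sum>t\<in>T. \<bar>cy y t\<bar> * t z)"
      by (rule sum.cong[OF refl]) (simp add: abs_mult tpos less_imp_le)
    also have "\<dots> \<le> (\<Sum>t\<in>T. \<bar>cy y t\<bar> * F z)"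
      by (intro sum_mono mult_left_mono tF) auto
    also have "\<dots> = (\<Sum>t\<in>T. \<bar>cy y t\<bar>) * F z" by (simp add: sum_distrib_right)
    also have "\<dots> \<le> A * F z"
    proof (rule mult_right_mono)
      show "(\<Sum>t\<in>T. \<bar>cy y t\<bar>) \<le> A" unfolding A_def
        by (rule member_le_sum[OF y, where f = "\<lambda>y. \<Sum>t\<in>T. \<bar>cy y t\<bar>"]) (auto simp: finY sum_nonneg)
    qed (use Fpos in \<open>auto intro: less_imp_le\<close>)
    finally show ?thesis .
  qed
  have coord: "\<bar>h z\<bar> \<le> A * (\<Sum>y\<in>Y. \<bar>h y\<bar>) * F z" if h: "h \<in> fun_span T" for h z
  proof -
    define h' where "h' = h - (\<Sum>y\<in>Y. fun_scale (h y) (L y))"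
    have h'T: "h' \<in> fun_span T" unfolding h'_def using h LT
      by (intro fs.span_diff fs.span_sum fs.span_scale) auto
    have hY: "\<forall>y'\<in>Y. h' y' = 0"
    proof
      fix y' assume that: "y' \<in> Y"
      have "(\<Sum>y\<in>Y. h y * L y y') = (\<Sum>y\<in>Y. if y = y' then h y else 0)"
        by (rule sum.cong) (use Ld that in auto)
      then show "h' y' = 0" using that finY by (simp add: h'_def sum_fun_apply fun_scale_apply)
    qed
    have "h' = 0" using U h'T hY by (meson)
    moreover have "h' z = h z - (\<Sum>y\<in>Y. h y * L y z)"
      by (simp add: h'_def sum_fun_apply fun_scale_apply)
    ultimately have hz: "h z = (\<Sum>y\<in>Y. h y * L y z)" by simp
    have "\<bar>h z\<bar> \<le> (\<Sum>y\<in>Y. \<bar>h y\<bar> * \<bar>L y z\<bar>)" unfolding hz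
      by (rule order.trans[OF sum_abs]) (simp add: abs_mult)
    also have "\<dots> \<le> (\<Sum>y\<in>Y. \<bar>h y\<bar> * (A * F z))"
      by (intro sum_mono mult_left_mono Lb) auto
    also have "\<dots> = A * (\<Sum>y\<in>Y. \<bar>h y\<bar>) * F z" by (simp add: sum_distrib_left mult_ac)
    finally show ?thesis .
  qed

  obtain f0 x1 x2 where f0S: "f0 \<in> Sp" and x12: "f0 x1 \<noteq> f0 x2"
    using assms(4) by (auto simp: Sp_def)
  obtain y0 where y0: "f0 y0 \<noteq> f0 0"
    using x12 by metis
  define \<delta> where "\<delta> = \<bar>f0 y0 - f0 0\<bar>"
  have \<delta>0: "0 < \<delta>" using y0 by (simp add: \<delta>_def)
  obtain b where fb: "\<And>z. f0 z = (\<Sum>t\<in>T. b t * t z)"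
    using span_fin_repr[OF finT] f0S SpT by blast
  define Bs where "Bs = (\<Sum>t\<in>T. \<bar>b t\<bar>)"
  have Bs0: "0 \<le> Bs" by (simp add: Bs_def sum_nonneg)
  obtain k0 c0 where c00: "0 < c0" and R0: "\<And>f x. (\<forall>z. 0 \<le> f z) \<Longrightarrow> c0 * f (x + y0) \<le> Pn \<mu> k0 f x"
    using walk_lemma[OF Fh Fp gen[of y0]] by blast
  have harnF: "c0 * F (x + y0) \<le> F x" for x
    using R0[of F x] Fpos Pn_harm[OF Fh] by (simp add: less_imp_le)
  define \<epsilon> where "\<epsilon> x = (\<Sum>t\<in>T. \<Sum>y\<in>Y. \<bar>t (x + y) - t x\<bar>)" for x
  define C1 where "C1 = Bs * A * (1 / c0 + 1)"
  have C10: "0 \<le> C1" using Bs0 A0 c00 by (simp add: C1_def)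
  have key: "\<delta> \<le> C1 * F (- x) * \<epsilon> x" for x
  proof -
    have ub: "\<bar>t (x + z) - t x\<bar> \<le> A * (\<Sum>y\<in>Y. \<bar>t (x + y) - t x\<bar>) * F z" if t: "t \<in> T" for t z
    proof -
      have "(\<lambda>z. t (x + z)) \<in> fun_span T" using transl[of t x] TS t SpT by blast
      moreover have "(\<lambda>_::'a. 1::real) \<in> fun_span T" using one SpT by blast
      ultimately have "(\<lambda>z. t (x + z)) - fun_scale (t x) (\<lambda>_::'a. 1::real) \<in> fun_span T"
        by (intro fs.span_diff fs.span_scale)
      moreover have "(\<lambda>z. t (x + z)) - fun_scale (t x) (\<lambda>_::'a. 1::real) = (\<lambda>z. t (x + z) - t x)"
        by (simp add: fun_eq_iff fun_scale_apply)
      ultimately have "(\<lambda>z. t (x + z) - t x) \<in> fun_span T" by simp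
      from coord[OF this, of z] show ?thesis by simp
    qed
    have eb: "\<bar>f0 (x + z) - f0 x\<bar> \<le> Bs * A * \<epsilon> x * F z" for z
    proof -
      have "f0 (x + z) - f0 x = (\<Sum>t\<in>T. b t * (t (x + z) - t x))"
        by (simp add: fb sum_subtractf right_diff_distrib)
      then have "\<bar>f0 (x + z) - f0 x\<bar> \<le> (\<Sum>t\<in>T. \<bar>b t\<bar> * \<bar>t (x + z) - t x\<bar>)"
        by (simp add: order.trans[OF sum_abs] abs_mult)
      also have "\<dots> \<le> (\<Sum>t\<in>T. \<bar>b t\<bar> * (A * \<epsilon> x * F z))"
      proof (rule sum_mono, rule mult_left_mono)
        fix t assume t: "t \<in> T"
        have "(\<Sum>y\<in>Y. \<bar>t (x + y) - t x\<bar>) \<le> \<epsilon> x" unfolding \<epsilon>_def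
          by (rule member_le_sum[OF t, where f = "\<lambda>t. \<Sum>y\<in>Y. \<bar>t (x + y) - t x\<bar>"]) (auto simp: finT sum_nonneg)
        then have "A * (\<Sum>y\<in>Y. \<bar>t (x + y) - t x\<bar>) * F z \<le> A * \<epsilon> x * F z"
          using A0 Fpos[of z] by (intro mult_right_mono mult_left_mono) auto
        then show "\<bar>t (x + z) - t x\<bar> \<le> A * \<epsilon> x * F z" using ub[OF t, of z] by linarith
      qed simp
      also have "\<dots> = Bs * A * \<epsilon> x * F z" by (simp add: Bs_def sum_distrib_left sum_distrib_right mult_ac)
      finally show ?thesis .
    qed
    have "f0 y0 - f0 0 = (f0 (x + (- x + y0)) - f0 x) - (f0 (x + - x) - f0 x)"
      by (simp add: add.assoc[symmetric])
    then have "\<delta> \<le> \<bar>f0 (x + (- x + y0)) - f0 x\<bar> + \<bar>f0 (x + - x) - f0 x\<bar>"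
      unfolding \<delta>_def by linarith
    also have "\<dots> \<le> Bs * A * \<epsilon> x * F (- x + y0) + Bs * A * \<epsilon> x * F (- x)"
      using eb[of "- x + y0"] eb[of "- x"] by linarith
    also have "\<dots> \<le> Bs * A * \<epsilon> x * (F (- x) / c0) + Bs * A * \<epsilon> x * F (- x)"
    proof -
      have "F (- x + y0) \<le> F (- x) / c0" using harnF[of "- x"] c00 by (simp add: pos_le_divide_eq mult.commute)
      moreover have "0 \<le> Bs * A * \<epsilon> x" using Bs0 A0 by (simp add: \<epsilon>_def sum_nonneg)
      ultimately have "Bs * A * \<epsilon> x * F (- x + y0) \<le> Bs * A * \<epsilon> x * (F (- x) / c0)"
        by (rule mult_left_mono)
      then show ?thesis by linarith
    qed
    also have "\<dots> = C1 * F (- x) * \<epsilon> x" by (simp add: C1_def algebra_simps)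
    finally show ?thesis .
  qed

  define P where "P t y k C \<longleftrightarrow> 0 \<le> C \<and> (\<forall>x. (t (x + y) - t x)^2 \<le> C * (1 + t x)^3 * (Pn \<mu> k (gt t) x - gt t x))"
    for t y k C
  have ex: "\<exists>k C. P t y k C" if "t \<in> T" for t y
    using walk_lemma[OF Th(1)[OF that] Th(2)[OF that] gen[of y]] unfolding P_def by blast
  define kk where "kk t y = (SOME k. \<exists>C. P t y k C)" for t y
  define CC where "CC t y = (SOME C. P t y (kk t y) C)" for t y
  have KC: "P t y (kk t y) (CC t y)" if "t \<in> T" for t y
  proof -
    have "\<exists>C. P t y (kk t y) C" unfolding kk_def by (rule someI_ex) (rule ex[OF that])
    then show ?thesis unfolding CC_def by (rule someI_ex)
  qed
  have gt01: "0 \<le> gt t z" "gt t z \<le> 1" if "t \<in> T" for t z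
    using tpos[OF that, of z] by (auto simp: gt_def)
  have Enn: "0 \<le> Pn \<mu> k (gt t) x - gt t x" if "t \<in> T" for t k x
    using Pn_gt_ge[OF Th(1)[OF that] Th(2)[OF that]] by simp
  define R where "R x = (\<Sum>t\<in>T. \<Sum>y\<in>Y. Pn \<mu> (kk t y) (gt t) x - gt t x)" for x
  have Rnn: "0 \<le> R x" for x unfolding R_def by (intro sum_nonneg Enn)
  define Cm where "Cm = (\<Sum>t\<in>T. \<Sum>y\<in>Y. CC t y) + 1"
  have CCle: "CC t y \<le> Cm" if "t \<in> T" "y \<in> Y" for t y
  proof -
    have nn: "0 \<le> CC t y" if "t \<in> T" for t y using KC[OF that] by (simp add: P_def)
    have "CC t y \<le> (\<Sum>y\<in>Y. CC t y)" by (rule member_le_sum[OF that(2)]) (use nn that finY in auto)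
    also have "\<dots> \<le> (\<Sum>t\<in>T. \<Sum>y\<in>Y. CC t y)"
      by (rule member_le_sum[OF that(1), where f = "\<lambda>t. \<Sum>y\<in>Y. CC t y"]) (use nn finT in \<open>auto intro: sum_nonneg\<close>)
    finally show ?thesis by (simp add: Cm_def)
  qed
  have Cm0: "0 < Cm"
  proof -
    have "0 \<le> (\<Sum>t\<in>T. \<Sum>y\<in>Y. CC t y)" using KC by (auto intro!: sum_nonneg simp: P_def)
    then show ?thesis by (simp add: Cm_def)
  qed
  define F0 where "F0 = F 0"
  have F00: "0 < F0" using Fpos by (simp add: F0_def)
  have C1p: "0 < C1"
  proof -
    have "\<delta> \<le> C1 * F (- 0) * \<epsilon> 0" by (rule key)
    then have "C1 \<noteq> 0" using \<delta>0 by auto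
    then show ?thesis using C10 by simp
  qed
  have Yne: "Y \<noteq> {}"
  proof
    assume "Y = {}"
    then have "\<epsilon> 0 = 0" by (simp add: \<epsilon>_def)
    then show False using key[of 0] \<delta>0 by simp
  qed
  define M where "M = card (T \<times> Y)"
  have M0: "0 < M" using finT finY Tne Yne by (simp add: M_def card_gt_0_iff)
  define \<eta> where "\<eta> = \<delta> / (C1 * (4 * F0))"
  have \<eta>0: "0 < \<eta>" using \<delta>0 C1p F00 by (simp add: \<eta>_def)
  define \<rho> where "\<rho> = (\<eta> / M)^2 / (Cm * (1 + 4 * F0)^3)"
  have \<rho>0: "0 < \<rho>" using \<eta>0 M0 Cm0 F00 by (simp add: \<rho>_def)
  have low: "\<rho> * (1 - F x / (4 * F0) - F (- x) / (4 * F0)) \<le> R x" for x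
  proof (cases "F x \<le> 4 * F0 \<and> F (- x) \<le> 4 * F0")
    case True
    have "\<delta> \<le> C1 * F (- x) * \<epsilon> x" by (rule key)
    also have "\<dots> \<le> C1 * (4 * F0) * \<epsilon> x"
      using True C10 by (intro mult_right_mono mult_left_mono) (auto simp: \<epsilon>_def sum_nonneg)
    finally have "\<eta> \<le> \<epsilon> x" using C1p F00 by (simp add: \<eta>_def pos_divide_le_eq mult.commute)
    then have "\<eta> \<le> (\<Sum>p\<in>T \<times> Y. \<bar>fst p (x + snd p) - fst p x\<bar>)"
      by (simp add: \<epsilon>_def sum.cartesian_product case_prod_beta)
    from pigeon[OF _ this \<eta>0] finT finY obtain t y where ty: "t \<in> T" "y \<in> Y"
      and big: "\<eta> / M \<le> \<bar>t (x + y) - t x\<bar>" by (auto simp: M_def)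
    define E where "E = Pn \<mu> (kk t y) (gt t) x - gt t x"
    have E0: "0 \<le> E" using Enn[OF ty(1)] by (simp add: E_def)
    have "(\<eta> / M)^2 \<le> (t (x + y) - t x)^2"
      using big \<eta>0 M0 by (metis power2_abs power_mono less_imp_le divide_pos_pos of_nat_0_less_iff)
    also have "\<dots> \<le> CC t y * (1 + t x)^3 * E" using KC[OF ty(1), of y] by (simp add: P_def E_def)
    also have "\<dots> \<le> Cm * (1 + 4 * F0)^3 * E"
    proof -
      have "1 + t x \<le> 1 + 4 * F0" using tF[OF ty(1), of x] True by simp
      then have "(1 + t x)^3 \<le> (1 + 4 * F0)^3" using tpos[OF ty(1), of x] by (intro power_mono) auto
      moreover have "0 \<le> CC t y" using KC[OF ty(1), of y] by (simp add: P_def)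
      ultimately show ?thesis using CCle[OF ty] E0 tpos[OF ty(1), of x]
        by (intro mult_right_mono mult_mono) auto
    qed
    finally have "\<rho> \<le> E" using Cm0 F00 by (simp add: \<rho>_def pos_divide_le_eq mult.commute)
    also have "E \<le> (\<Sum>y\<in>Y. Pn \<mu> (kk t y) (gt t) x - gt t x)"
      unfolding E_def by (rule member_le_sum[OF ty(2)]) (use Enn ty finY in auto)
    also have "\<dots> \<le> R x" unfolding R_def
      by (rule member_le_sum[OF ty(1), where f = "\<lambda>t. \<Sum>y\<in>Y. Pn \<mu> (kk t y) (gt t) x - gt t x"])
         (use Enn finT in \<open>auto intro: sum_nonneg\<close>)
    finally have "\<rho> \<le> R x" .
    moreover have "\<rho> * (1 - F x / (4 * F0) - F (- x) / (4 * F0)) \<le> \<rho>"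
    proof -
      have "0 \<le> F x / (4 * F0)" "0 \<le> F (- x) / (4 * F0)" using Fpos[of x] Fpos[of "- x"] F00 by auto
      then show ?thesis using \<rho>0 by (simp add: mult_le_cancel_left1)
    qed
    ultimately show ?thesis by linarith
  next
    case False
    then have "1 < F x / (4 * F0) \<or> 1 < F (- x) / (4 * F0)" using F00 by auto
    moreover have "0 \<le> F x / (4 * F0)" "0 \<le> F (- x) / (4 * F0)" using Fpos[of x] Fpos[of "- x"] F00 by auto
    ultimately have "1 - F x / (4 * F0) - F (- x) / (4 * F0) < 0" by linarith
    then have "\<rho> * (1 - F x / (4 * F0) - F (- x) / (4 * F0)) < 0" using \<rho>0 by (simp add: mult_pos_neg)
    then show ?thesis using Rnn[of x] by linarith
  qed

  have PnF: "Pn \<mu> n F 0 = F0" for n using Pn_harm[OF Fh] by (simp add: F0_def)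
  have PnFn: "Pn \<mu> n (\<lambda>z. F (- z)) 0 = F0" for n using Pn_neg[of n F] PnF by simp
  have lowPn: "\<rho> / 2 \<le> Pn \<mu> n R 0" for n
  proof -
    define a where "a = \<rho> / (4 * F0)"
    have eqp: "\<rho> - a * F z - a * F (- z) = \<rho> * (1 - F z / (4 * F0) - F (- z) / (4 * F0))" for z
      by (simp add: a_def algebra_simps)
    have "Pn \<mu> n (\<lambda>z. \<rho> - a * F z - a * F (- z)) 0 \<le> Pn \<mu> n R 0"
      by (rule Pn_mono) (subst eqp, rule low)
    moreover have "Pn \<mu> n (\<lambda>z. \<rho> - a * F z - a * F (- z)) 0 = \<rho> - a * F0 - a * F0"
      by (simp add: Pn_diff Pn_const Pn_scale PnF PnFn)
    moreover have "a * F0 = \<rho> / 4" using F00 by (simp add: a_def)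
    ultimately show ?thesis by simp
  qed
  define K where "K = (\<Sum>t\<in>T. \<Sum>y\<in>Y. real (kk t y))"
  have upPn: "(\<Sum>n<N. Pn \<mu> n R 0) \<le> K" for N
  proof -
    have "Pn \<mu> n R 0 = (\<Sum>t\<in>T. \<Sum>y\<in>Y. Pn \<mu> (n + kk t y) (gt t) 0 - Pn \<mu> n (gt t) 0)" for n
      unfolding R_def by (simp add: Pn_sum Pn_diff Pn_Pn)
    then have "(\<Sum>n<N. Pn \<mu> n R 0) = (\<Sum>t\<in>T. \<Sum>y\<in>Y. \<Sum>n<N. Pn \<mu> (n + kk t y) (gt t) 0 - Pn \<mu> n (gt t) 0)"
      by (simp add: sum.swap[of _ "{..<N}"])
    also have "\<dots> \<le> K" unfolding K_def
    proof (intro sum_mono)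
      fix t y assume t: "t \<in> T"
      show "(\<Sum>n<N. Pn \<mu> (n + kk t y) (gt t) 0 - Pn \<mu> n (gt t) 0) \<le> real (kk t y)"
      proof (rule telescope_bound)
        fix n
        show "0 \<le> Pn \<mu> n (gt t) 0" by (rule Pn_nonneg) (rule gt01(1)[OF t])
        show "Pn \<mu> n (gt t) 0 \<le> 1" using Pn_mono[of "gt t" "\<lambda>_. 1" n 0] gt01(2)[OF t] by (simp add: Pn_const)
      qed
    qed
    finally show ?thesis .
  qed
  define N where "N = nat \<lceil>2 * K / \<rho>\<rceil> + 1"
  have "real N * (\<rho> / 2) \<le> (\<Sum>n<N. Pn \<mu> n R 0)"
    using sum_mono[of "{..<N}" "\<lambda>_. \<rho> / 2" "\<lambda>n. Pn \<mu> n R 0"] lowPn by simp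
  also have "\<dots> \<le> K" by (rule upPn)
  finally have "real N * (\<rho> / 2) \<le> K" .
  moreover have "2 * K / \<rho> < real N" unfolding N_def by linarith
  then have "K < real N * (\<rho> / 2)" using \<rho>0 by (simp add: pos_divide_less_eq algebra_simps)
  ultimately show False by simp
qed

end
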